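(* For every $\alpha \in (0,\frac12)$ it holds that $T_\alpha(\alpha) = T_\alpha^2(1-\alpha)$.
   Context: For $\alpha \in (0,1)$ let $D_\alpha = \bigcup_{n \ge 1} \big[ \frac{1}{n+\alpha}, \frac1n \big]$, $D_\alpha^{\mathsf c} = [0,1]\setminus D_\alpha$, $I_\alpha = [\min\{\alpha,1-\alpha\},1]$, and $T_\alpha : I_\alpha \to I_\alpha$, $T_\alpha(x) = \frac1x - \lfloor \frac1x \rfloor$ if $x \in D_\alpha^{\mathsf c}$, $T_\alpha(x) = 1 + \lfloor \frac1x \rfloor - \frac1x$ if $x \in D_\alpha$. *)

theory Defs
  imports Complex_Main
begin

definition D_alpha :: "real \<Rightarrow> real set" where
  "D_alpha \<alpha> = (\<Union>n\<in>{1::nat..}. {1 / (real n + \<alpha>) .. 1 / real n})"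

definition I_alpha :: "real \<Rightarrow> real set" where
  "I_alpha \<alpha> = {min \<alpha> (1 - \<alpha>) .. 1}"

text \<open>The map T_alpha, given by its defining formula (intended domain I_alpha).\<close>
definition T_alpha :: "real \<Rightarrow> real \<Rightarrow> real" where
  "T_alpha \<alpha> x = (if x \<in> D_alpha \<alpha>
                     then 1 + of_int \<lfloor>1 / x\<rfloor> - 1 / x
                     else 1 / x - of_int \<lfloor>1 / x\<rfloor>)"

end

theory Submission
  imports Defs
begin

lemma memD:
  fixes a y :: real
  assumes y: "0 < y" "y \<le> 1" and a: "0 < a" "a < 1"
  shows "y \<in> D_alpha a \<longleftrightarrow> 1/y - of_int \<lfloor>1/y\<rfloor> \<le> a"
proof
  assume "y \<in> D_alpha a"
  then obtain n :: nat where n: "n \<ge> 1" "1/(real n + a) \<le> y" "y \<le> 1/real n"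
    unfolding D_alpha_def by auto
  have "real n \<le> 1/y" using n y by (simp add: field_simps)
  moreover have "1/y \<le> real n + a"
  proof -
    have p: "0 < real n + a" using n a by simp
    have "1 \<le> y * (real n + a)" using n(2) p by (simp add: field_simps)
    then show ?thesis using y p by (simp add: field_simps)
  qed
  ultimately have "\<lfloor>1/y\<rfloor> = int n" using a by (intro floor_unique) auto
  then show "1/y - of_int \<lfloor>1/y\<rfloor> \<le> a" using \<open>1/y \<le> real n + a\<close> by simp
next
  assume h: "1/y - of_int \<lfloor>1/y\<rfloor> \<le> a"
  have "1 \<le> 1/y" using y by simp
  then have f1: "1 \<le> \<lfloor>1/y\<rfloor>" by linarith
  define n where "n = nat \<lfloor>1/y\<rfloor>"
  have ni: "int n = \<lfloor>1/y\<rfloor>" using f1 n_def y by simp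
  have nn: "real n = of_int \<lfloor>1/y\<rfloor>" by (metis ni of_int_of_nat_eq)
  have "n \<ge> 1" using f1 ni by linarith
  have le1: "real n \<le> 1/y" using nn by linarith
  have le2: "1/y \<le> real n + a" using nn h by linarith
  have "y \<le> 1/real n" using le1 y \<open>n \<ge> 1\<close> by (simp add: field_simps)
  moreover have "1/(real n + a) \<le> y" using le2 y a \<open>n \<ge> 1\<close> by (simp add: field_simps)
  ultimately show "y \<in> D_alpha a" unfolding D_alpha_def using \<open>n \<ge> 1\<close> by auto
qed

lemma Tform:
  fixes a y :: real
  assumes y: "0 < y" "y \<le> 1" and a: "0 < a" "a < 1"
  shows "T_alpha a y = (if 1/y - of_int \<lfloor>1/y\<rfloor> \<le> a then 1 - (1/y - of_int \<lfloor>1/y\<rfloor>)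
                        else 1/y - of_int \<lfloor>1/y\<rfloor>)"
  using memD[OF assms] unfolding T_alpha_def by auto

theorem proposition3p1:
  fixes \<alpha> :: real
  assumes "0 < \<alpha>" and "\<alpha> < 1 / 2"
  shows "T_alpha \<alpha> \<alpha> = T_alpha \<alpha> (T_alpha \<alpha> (1 - \<alpha>))"
proof -
  have a: "0 < \<alpha>" "\<alpha> < 1" using assms by auto
  have inv: "1/(1-\<alpha>) = 1 + \<alpha>/(1-\<alpha>)" using assms by (simp add: field_simps)
  have x0: "0 < \<alpha>/(1-\<alpha>)" "\<alpha>/(1-\<alpha>) < 1" using assms by (auto simp: field_simps)
  have fl: "\<lfloor>1/(1-\<alpha>)\<rfloor> = 1" unfolding inv using x0 by (intro floor_unique) auto
  have gt: "\<alpha> < \<alpha>/(1-\<alpha>)" using assms by (simp add: field_simps)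
  have T1: "T_alpha \<alpha> (1-\<alpha>) = \<alpha>/(1-\<alpha>)"
    using Tform[of "1-\<alpha>" \<alpha>] assms fl inv gt by auto
  have r: "1/(\<alpha>/(1-\<alpha>)) = 1/\<alpha> - 1" using assms by (simp add: field_simps)
  have fr: "\<lfloor>1/\<alpha> - 1\<rfloor> = \<lfloor>1/\<alpha>\<rfloor> - 1" by (metis floor_diff_one)
  show ?thesis
    unfolding T1 using Tform[of "\<alpha>/(1-\<alpha>)" \<alpha>] Tform[of \<alpha> \<alpha>] x0 a r fr by simp
qed

end
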